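(* Let $G=(V,E)$ be a finite connected simple graph and $i\in V$ such that $G-i$ is connected. Let $\tilde f:V\to\mathbb{R}$ be a solution of $$\min_{\|g\|_2=1,\ g(i)=0}\ \max_{ab\in E}|g(a)-g(b)|$$ with $\tilde f(j)>0$ for some $j$. Let $T_i^{(c)}$ be the spanning tree obtained by joining each vertex $x\ne i$ to a neighbor minimizing $\tilde f$ (ties broken arbitrarily), and for $j\in V$ let the spread-path from $j$ to $i$ be the path from $j$ to $i$ in $T_i^{(c)}$. Then every spread-path from $j$ to $i$ is a shortest path (in number of edges) from $j$ to $i$ in $G$.
   Context: Under the hypotheses, $\tilde f$ is positive on $V\setminus\{i\}$ and every vertex $x\neq i$ has a neighbor with strictly smaller $\tilde f$-value, so $T_i^{(c)}$ is a spanning tree of $G$. *)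

theory Defs
  imports Main "HOL-Analysis.Analysis"
begin

definition simple_graph :: "'a set \<Rightarrow> ('a \<Rightarrow> 'a \<Rightarrow> bool) \<Rightarrow> bool" where
  "simple_graph V E \<longleftrightarrow> finite V \<and> (\<forall>a b. E a b \<longrightarrow> a \<in> V \<and> b \<in> V)
     \<and> (\<forall>a b. E a b \<longrightarrow> E b a) \<and> (\<forall>a. \<not> E a a)"

definition connected_on :: "'a set \<Rightarrow> ('a \<Rightarrow> 'a \<Rightarrow> bool) \<Rightarrow> bool" where
  "connected_on W E \<longleftrightarrow> W \<noteq> {} \<and>
     (\<forall>x\<in>W. \<forall>y\<in>W. (\<lambda>a b. E a b \<and> a \<in> W \<and> b \<in> W)\<^sup>*\<^sup>* x y)"

definition edge_max :: "'a set \<Rightarrow> ('a \<Rightarrow> 'a \<Rightarrow> bool) \<Rightarrow> ('a \<Rightarrow> real) \<Rightarrow> real" where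
  "edge_max V E g = Max {\<bar>g a - g b\<bar> | a b. a \<in> V \<and> b \<in> V \<and> E a b}"

definition admissible :: "'a set \<Rightarrow> 'a \<Rightarrow> ('a \<Rightarrow> real) \<Rightarrow> bool" where
  "admissible V i g \<longleftrightarrow> sqrt (\<Sum>x\<in>V. (g x)\<^sup>2) = 1 \<and> g i = 0"

definition is_minimizer :: "'a set \<Rightarrow> ('a \<Rightarrow> 'a \<Rightarrow> bool) \<Rightarrow> 'a \<Rightarrow> ('a \<Rightarrow> real) \<Rightarrow> bool" where
  "is_minimizer V E i f \<longleftrightarrow> admissible V i f \<and>
     (\<forall>g. admissible V i g \<longrightarrow> edge_max V E f \<le> edge_max V E g)"

text \<open>p encodes T_i^(c): each x \<noteq> i is joined to a neighbour minimizing f.\<close>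
definition spread_parent :: "'a set \<Rightarrow> ('a \<Rightarrow> 'a \<Rightarrow> bool) \<Rightarrow> 'a \<Rightarrow> ('a \<Rightarrow> real) \<Rightarrow> ('a \<Rightarrow> 'a) \<Rightarrow> bool" where
  "spread_parent V E i f p \<longleftrightarrow>
     (\<forall>x\<in>V - {i}. E x (p x) \<and> (\<forall>y. E x y \<longrightarrow> f (p x) \<le> f y))"

definition walk_len :: "('a \<Rightarrow> 'a \<Rightarrow> bool) \<Rightarrow> 'a \<Rightarrow> 'a \<Rightarrow> nat \<Rightarrow> bool" where
  "walk_len E x y m \<longleftrightarrow> (\<exists>ws. length ws = Suc m \<and> ws ! 0 = x \<and> ws ! m = y \<and>
     (\<forall>k<m. E (ws ! k) (ws ! Suc k)))"

end

theory Submission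
  imports Defs
begin

lemma walk_cons: "E x y \<Longrightarrow> walk_len E y z m \<Longrightarrow> walk_len E x z (Suc m)"
  unfolding walk_len_def
proof (elim exE conjE)
  fix ws assume h: "E x y" "length ws = Suc m" "ws ! 0 = y" "ws ! m = z"
    "\<forall>k<m. E (ws ! k) (ws ! Suc k)"
  show "\<exists>ws. length ws = Suc (Suc m) \<and> ws ! 0 = x \<and> ws ! Suc m = z \<and>
     (\<forall>k<Suc m. E (ws ! k) (ws ! Suc k))"
  proof (intro exI[of _ "x # ws"] conjI allI impI)
    fix k assume "k < Suc m"
    then show "E ((x # ws) ! k) ((x # ws) ! Suc k)"
      using h by (cases k) auto
  qed (use h in auto)
qed

lemma walk_tail: "walk_len E x z (Suc m) \<Longrightarrow> \<exists>y. E x y \<and> walk_len E y z m"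
  unfolding walk_len_def
proof (elim exE conjE)
  fix ws assume h: "length ws = Suc (Suc m)" "ws ! 0 = x" "ws ! Suc m = z"
    "\<forall>k<Suc m. E (ws ! k) (ws ! Suc k)"
  show "\<exists>y. E x y \<and> (\<exists>ws. length ws = Suc m \<and> ws ! 0 = y \<and> ws ! m = z \<and>
     (\<forall>k<m. E (ws ! k) (ws ! Suc k)))"
    apply (rule exI[of _ "ws ! 1"], rule conjI)
    using h apply (metis One_nat_def zero_less_Suc)
    apply (rule exI[of _ "tl ws"])
    using h by (auto simp: nth_tl)
qed

lemma walk_0: "walk_len E x z 0 \<longleftrightarrow> x = z"
  unfolding walk_len_def
  by (auto intro: exI[of _ "[x]"])

lemma rtr_walk:
  assumes "(\<lambda>a b. E a b \<and> a \<in> W \<and> b \<in> W)\<^sup>*\<^sup>* x y"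
  shows "\<exists>m. walk_len E x y m"
  using assms
proof (induction rule: converse_rtranclp_induct)
  case base then show ?case using walk_0 by metis
next
  case (step a b) then show ?case using walk_cons by metis
qed

lemma walk_bound:
  assumes "\<And>a b. E a b \<Longrightarrow> \<bar>f a - f b\<bar> \<le> (L::real)"
  shows "walk_len E x z m \<Longrightarrow> \<bar>f x - f z\<bar> \<le> L * m"
proof (induction m arbitrary: x)
  case 0 then show ?case using walk_0 by (metis abs_zero cancel_comm_monoid_add_class.diff_cancel mult_zero_right of_nat_0 order_refl)
next
  case (Suc m)
  then obtain y where "E x y" "walk_len E y z m" using walk_tail by metis
  then have "\<bar>f y - f z\<bar> \<le> L * m" "\<bar>f x - f y\<bar> \<le> L" using Suc assms by auto
  then show ?case by (simp add: algebra_simps)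
qed

theorem theorem21:
  fixes V :: "'a set" and E :: "'a \<Rightarrow> 'a \<Rightarrow> bool" and i :: 'a
    and f :: "'a \<Rightarrow> real" and p :: "'a \<Rightarrow> 'a"
  assumes "simple_graph V E"
    and "connected_on V E"
    and "i \<in> V"
    and "connected_on (V - {i}) E"
    and "is_minimizer V E i f"
    and "\<exists>j\<in>V. f j > 0"
    and "spread_parent V E i f p"
  shows "\<forall>j\<in>V. \<exists>n. (p ^^ n) j = i \<and> (\<forall>k<n. (p ^^ k) j \<noteq> i)
            \<and> (\<forall>m. walk_len E j i m \<longrightarrow> n \<le> m)"
proof -
  have fin: "finite V" and EV: "\<And>a b. E a b \<Longrightarrow> a \<in> V \<and> b \<in> V"
    and Esym: "\<And>a b. E a b \<Longrightarrow> E b a"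
    using assms(1) unfolding simple_graph_def by auto
  define d where "d x = (LEAST m. walk_len E x i m)" for x
  have ex: "\<exists>m. walk_len E x i m" if "x \<in> V" for x
  proof -
    have "(\<lambda>a b. E a b \<and> a \<in> V \<and> b \<in> V)\<^sup>*\<^sup>* x i"
      using assms(2,3) that unfolding connected_on_def by blast
    then show ?thesis by (rule rtr_walk)
  qed
  have dwalk: "walk_len E x i (d x)" if "x \<in> V" for x
    unfolding d_def using ex[OF that] by (rule LeastI_ex)
  have dle: "d x \<le> m" if "walk_len E x i m" for x m
    unfolding d_def using that by (rule Least_le)
  have d0: "d i = 0" using dle[of i 0] walk_0[of E i i] by simp
  have dz: "x = i" if "x \<in> V" "d x = 0" for x
    using dwalk[OF that(1)] that(2) walk_0 by metis
  have D1: "d x \<le> d y + 1" if "E x y" for x y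
    using dle[OF walk_cons[OF that dwalk]] EV[OF that] by simp
  have D2: "\<exists>y. E x y \<and> d y + 1 = d x" if xV: "x \<in> V" and xi: "x \<noteq> i" for x
  proof -
    obtain m where m: "d x = Suc m" using dz xV xi by (cases "d x") auto
    then obtain y where y: "E x y" "walk_len E y i m" using walk_tail dwalk[OF xV] by metis
    have "d y \<le> m" using dle[OF y(2)] .
    moreover have "d x \<le> d y + 1" using D1[OF y(1)] .
    ultimately show ?thesis using y m by auto
  qed
  obtain x0 where x0: "x0 \<in> V" "x0 \<noteq> i" using assms(4) unfolding connected_on_def by auto
  define S where "S = (\<Sum>x\<in>V. (real (d x))\<^sup>2)"
  have "real (d x0) \<ge> 1" using dz x0 by (cases "d x0") auto
  then have "(real (d x0))\<^sup>2 \<le> S" unfolding S_def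
    using x0 fin by (intro member_le_sum) auto
  moreover have "1 \<le> (real (d x0))\<^sup>2" using \<open>real (d x0) \<ge> 1\<close> by (simp add: one_le_power)
  ultimately have Spos: "S > 0" by linarith
  define g0 where "g0 x = real (d x) / sqrt S" for x
  have adm: "admissible V i g0"
  proof -
    have "(\<Sum>x\<in>V. (g0 x)\<^sup>2) = (\<Sum>x\<in>V. (real (d x))\<^sup>2 / S)"
      unfolding g0_def using Spos by (simp add: power_divide)
    also have "\<dots> = 1" unfolding S_def[symmetric] sum_divide_distrib[symmetric] using Spos by simp
    finally show ?thesis unfolding admissible_def g0_def using d0 by simp
  qed
  define ES where "ES h = {\<bar>h a - h b\<bar> | a b. a \<in> V \<and> b \<in> V \<and> E a b}" for h :: "'a \<Rightarrow> real"
  have ESfin: "finite (ES h)" for h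
  proof -
    have "ES h \<subseteq> (\<lambda>(a,b). \<bar>h a - h b\<bar>) ` (V \<times> V)" unfolding ES_def by auto
    moreover have "finite ((\<lambda>(a,b). \<bar>h a - h b\<bar>) ` (V \<times> V))" using fin by simp
    ultimately show ?thesis by (rule finite_subset)
  qed
  obtain y0 where y0: "E x0 y0" using D2 x0 by blast
  have ESne: "ES h \<noteq> {}" for h unfolding ES_def using y0 EV by blast
  define L where "L = edge_max V E f"
  have Ledge: "\<bar>f a - f b\<bar> \<le> L" if "E a b" for a b
    unfolding L_def edge_max_def ES_def[symmetric]
    using ESfin by (rule Max_ge) (use that EV in \<open>auto simp: ES_def\<close>)
  have "edge_max V E g0 \<le> 1 / sqrt S"
    unfolding edge_max_def ES_def[symmetric]
  proof (subst Max_le_iff[OF ESfin ESne], rule ballI)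
    fix t assume "t \<in> ES g0"
    then obtain a b where ab: "t = \<bar>g0 a - g0 b\<bar>" "E a b" unfolding ES_def by auto
    have "\<bar>real (d a) - real (d b)\<bar> \<le> 1" using D1[OF ab(2)] D1[OF Esym[OF ab(2)]] by linarith
    then show "t \<le> 1 / sqrt S" unfolding ab g0_def using Spos
      by (simp add: diff_divide_distrib[symmetric] divide_right_mono)
  qed
  moreover have "edge_max V E f \<le> edge_max V E g0" using assms(5) adm unfolding is_minimizer_def by blast
  ultimately have Lle: "L \<le> 1 / sqrt S" unfolding L_def by linarith
  have L0: "L \<ge> 0" using Ledge[OF y0] by linarith
  have fb: "\<bar>f x\<bar> \<le> L * d x" if "x \<in> V" for x
    using walk_bound[of E f L, OF Ledge dwalk[OF that]] assms(5)
    unfolding is_minimizer_def admissible_def by simp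
  have sumf: "(\<Sum>x\<in>V. (f x)\<^sup>2) = 1"
    using assms(5) unfolding is_minimizer_def admissible_def by simp
  have fb2: "(f x)\<^sup>2 \<le> L\<^sup>2 * (real (d x))\<^sup>2" if "x \<in> V" for x
  proof -
    have "\<bar>f x\<bar>\<^sup>2 \<le> (L * d x)\<^sup>2" using fb[OF that] by (intro power_mono) auto
    then show ?thesis by (simp add: power_mult_distrib)
  qed
  have "L\<^sup>2 * S \<le> 1"
  proof -
    have "L\<^sup>2 \<le> (1 / sqrt S)\<^sup>2" using Lle L0 by (intro power_mono) auto
    then have "L\<^sup>2 \<le> 1 / S" using Spos by (simp add: power_divide)
    then show ?thesis using Spos by (simp add: field_simps)
  qed
  have sumeq: "(\<Sum>x\<in>V. L\<^sup>2 * (real (d x))\<^sup>2 - (f x)\<^sup>2) = 0"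
  proof -
    have "(\<Sum>x\<in>V. L\<^sup>2 * (real (d x))\<^sup>2 - (f x)\<^sup>2) = L\<^sup>2 * S - 1"
      unfolding sum_subtractf sumf S_def sum_distrib_left by simp
    moreover have "(\<Sum>x\<in>V. L\<^sup>2 * (real (d x))\<^sup>2 - (f x)\<^sup>2) \<ge> 0"
      using fb2 by (intro sum_nonneg) auto
    ultimately show ?thesis using \<open>L\<^sup>2 * S \<le> 1\<close> by linarith
  qed
  have feq2: "(f x)\<^sup>2 = L\<^sup>2 * (real (d x))\<^sup>2" if "x \<in> V" for x
  proof -
    have "L\<^sup>2 * (real (d x))\<^sup>2 - (f x)\<^sup>2 = 0"
      using sum_nonneg_eq_0_iff[OF fin, of "\<lambda>x. L\<^sup>2 * (real (d x))\<^sup>2 - (f x)\<^sup>2"] sumeq fb2 that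
      by auto
    then show ?thesis by simp
  qed
  have fabs: "\<bar>f x\<bar> = L * d x" if "x \<in> V" for x
  proof -
    have "\<bar>f x\<bar>\<^sup>2 = (L * d x)\<^sup>2" using feq2[OF that] by (simp add: power_mult_distrib)
    then have "sqrt (\<bar>f x\<bar>\<^sup>2) = sqrt ((L * d x)\<^sup>2)" by simp
    then have "\<bar>f x\<bar> = \<bar>L * d x\<bar>" by simp
    then show ?thesis using L0 by simp
  qed
  have Lpos: "L > 0"
  proof (rule ccontr)
    assume "\<not> L > 0" then have "L = 0" using L0 by simp
    then have "f x = 0" if "x \<in> V" for x using fabs[OF that] by simp
    then show False using sumf by simp
  qed
  obtain j where j: "j \<in> V" "f j > 0" using assms(6) by blast
  have ji: "j \<noteq> i" using j assms(5) unfolding is_minimizer_def admissible_def by auto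
  have dpos: "d x \<ge> 1" if "x \<in> V" "x \<noteq> i" for x using dz that by (cases "d x") auto
  let ?R = "\<lambda>a b. E a b \<and> a \<in> V - {i} \<and> b \<in> V - {i}"
  have fpos_step: "f b > 0" if "f a > 0" "?R a b" for a b
  proof (rule ccontr)
    assume "\<not> f b > 0"
    then have "f b = - (L * d b)" using fabs[of b] that by auto
    moreover have "f a = L * d a" using fabs[of a] that by auto
    moreover have "real (d a) \<ge> 1" "real (d b) \<ge> 1" using dpos that by auto
    moreover have "L * 1 \<le> L * real (d a)" "L * 1 \<le> L * real (d b)"
      using Lpos \<open>real (d a) \<ge> 1\<close> \<open>real (d b) \<ge> 1\<close> by (intro mult_left_mono; simp)+
    ultimately have "f a - f b \<ge> 2 * L" by linarith
    then show False using Ledge[of a b] that Lpos by auto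
  qed
  have fpos: "f x > 0" if "x \<in> V" "x \<noteq> i" for x
  proof -
    have "?R\<^sup>*\<^sup>* j x" using assms(4) j ji that unfolding connected_on_def by auto
    then show ?thesis
    proof (induction rule: rtranclp_induct)
      case base then show ?case using j by simp
    next
      case (step y z) then show ?case using fpos_step by blast
    qed
  qed
  have fd: "f x = L * d x" if "x \<in> V" for x
  proof (cases "x = i")
    case True then show ?thesis using d0 assms(5) unfolding is_minimizer_def admissible_def by simp
  next
    case False then show ?thesis using fabs[OF that] fpos[OF that] by auto
  qed
  have pstep: "p x \<in> V \<and> d (p x) + 1 = d x" if xV: "x \<in> V" and xi: "x \<noteq> i" for x
  proof -
    have px: "E x (p x)" and pmin: "\<And>y. E x y \<Longrightarrow> f (p x) \<le> f y"
      using assms(7) xV xi unfolding spread_parent_def by auto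
    obtain y where y: "E x y" "d y + 1 = d x" using D2[OF xV xi] by blast
    have "f (p x) \<le> f y" using pmin[OF y(1)] .
    moreover have "f (p x) = L * d (p x)" using fd EV[OF px] by blast
    moreover have "f y = L * d y" using fd EV[OF y(1)] by blast
    ultimately have "L * d (p x) \<le> L * d y" by simp
    then have "d (p x) \<le> d y" using Lpos by simp
    moreover have "d x \<le> d (p x) + 1" using D1[OF px] .
    ultimately show ?thesis using y EV[OF px] by auto
  qed
  have iter: "(p ^^ k) x \<in> V \<and> d ((p ^^ k) x) + k = d x" if "x \<in> V" "k \<le> d x" for x k
    using that(2)
  proof (induction k)
    case 0 then show ?case using that(1) by simp
  next
    case (Suc k)
    then have IH: "(p ^^ k) x \<in> V" "d ((p ^^ k) x) + k = d x" by auto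
    then have "(p ^^ k) x \<noteq> i" using Suc.prems d0 by auto
    then show ?case using pstep[OF IH(1)] IH by auto
  qed
  show ?thesis
  proof (intro ballI exI[of _ "d _"] conjI allI impI)
    fix x assume x: "x \<in> V"
    show "(p ^^ d x) x = i" using iter[OF x, of "d x"] dz by auto
    fix k assume "k < d x"
    then show "(p ^^ k) x \<noteq> i" using iter[OF x, of k] d0 by auto
  next
    fix x m assume "walk_len E x i m" then show "d x \<le> m" by (rule dle)
  qed
qed

end
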